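(* Let $M\in\mathbb{R}^{n\times n}$ be a P$_s$-matrix, $q\in\mathbb{R}^n$ and $r\ge2$. Then for every $\gamma\ge0$ the level set $$\mathcal{L}_s(f_r,\gamma):=\{x\in S: f_r(x)\le\gamma\}$$ is bounded. Moreover, $\mathrm{sol}(M,q)\cap S\subseteq\operatorname{argmin}_{x\in S}f_r(x)$, and both of these sets are bounded.
   Context: $f_r(x)=\frac1r\big[\langle x_+^r,(Mx+q)_+^r\rangle+\|x_-\|_r^r+\|(Mx+q)_-\|_r^r\big]$ with $a_+=\max\{a,0\}$, $a_-=\min\{a,0\}$ componentwise, $x_+^r$ the componentwise $r$th power of $x_+$, $\|z\|_r^r=\sum_i|z_i|^r$. $S=\{x\in\mathbb{R}^n:\|x\|_0\le s\}$ ($\|x\|_0$ = number of nonzero entries). $\mathrm{sol}(M,q)=\{x: x\ge0,\ Mx+q\ge0,\ \langle x,Mx+q\rangle=0\}$. A P$_s$-matrix is a square matrix all of whose principal minors of order up to $s$ are positive. *)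

theory Defs
  imports "HOL-Analysis.Analysis"
begin

definition principal_minor :: "real^'n^'n \<Rightarrow> 'n set \<Rightarrow> real" where
  "principal_minor M I =
     (\<Sum>p\<in>{p. p permutes I}. of_int (sign p) * (\<Prod>i\<in>I. M $ i $ p i))"

definition Ps_matrix :: "nat \<Rightarrow> real^'n^'n \<Rightarrow> bool" where
  "Ps_matrix s M \<longleftrightarrow> (\<forall>I. I \<noteq> {} \<and> card I \<le> s \<longrightarrow> principal_minor M I > 0)"

definition sparse_set :: "nat \<Rightarrow> (real^'n) set" where
  "sparse_set s = {x. card {i. x $ i \<noteq> 0} \<le> s}"

definition f_r :: "real^'n^'n \<Rightarrow> real^'n \<Rightarrow> real \<Rightarrow> real^'n \<Rightarrow> real" where
  "f_r M q r x = (1 / r) *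
     ((\<Sum>i\<in>UNIV. (max (x $ i) 0) powr r * (max ((M *v x + q) $ i) 0) powr r)
      + (\<Sum>i\<in>UNIV. \<bar>min (x $ i) 0\<bar> powr r)
      + (\<Sum>i\<in>UNIV. \<bar>min ((M *v x + q) $ i) 0\<bar> powr r))"

definition lcp_sol :: "real^'n^'n \<Rightarrow> real^'n \<Rightarrow> (real^'n) set" where
  "lcp_sol M q = {x. (\<forall>i. 0 \<le> x $ i) \<and> (\<forall>i. 0 \<le> (M *v x + q) $ i) \<and> x \<bullet> (M *v x + q) = 0}"

definition argmin_on :: "('a \<Rightarrow> real) \<Rightarrow> 'a set \<Rightarrow> 'a set" where
  "argmin_on f S = {x \<in> S. \<forall>y\<in>S. f x \<le> f y}"

end

theory Submission
  imports Defs
begin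

lemma minor_det:
  fixes M :: "real^'n^'n" and I :: "'n set"
  defines "A \<equiv> (\<chi> i j. if i \<in> I \<and> j \<in> I then M$i$j else if i = j then 1 else 0) :: real^'n^'n"
  shows "det A = principal_minor M I"
proof -
  have "det A = (\<Sum>p\<in>{p. p permutes UNIV}. of_int (sign p) * (\<Prod>i\<in>UNIV. A $ i $ p i))"
    unfolding det_def by simp
  also have "\<dots> = (\<Sum>p\<in>{p. p permutes I}. of_int (sign p) * (\<Prod>i\<in>UNIV. A $ i $ p i))"
  proof (rule sum.mono_neutral_right)
    show "finite {p. p permutes (UNIV::'n set)}" by (simp add: finite_permutations)
    show "{p. p permutes I} \<subseteq> {p. p permutes (UNIV::'n set)}"
      using permutes_subset by blast
    show "\<forall>p\<in>{p. p permutes UNIV} - {p. p permutes I}. of_int (sign p) * (\<Prod>i\<in>UNIV. A $ i $ p i) = 0"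
    proof
      fix p assume p: "p \<in> {p. p permutes (UNIV::'n set)} - {p. p permutes I}"
      then have "\<exists>i. i \<notin> I \<and> p i \<noteq> i"
        unfolding permutes_def by auto
      then obtain i where "i \<notin> I" "p i \<noteq> i" by blast
      then have "A $ i $ p i = 0" unfolding A_def by simp
      then show "of_int (sign p) * (\<Prod>i\<in>UNIV. A $ i $ p i) = 0"
        by (metis UNIV_I finite mult_zero_right prod_zero_iff)
    qed
  qed
  also have "\<dots> = principal_minor M I"
    unfolding principal_minor_def
  proof (rule sum.cong[OF refl])
    fix p assume "p \<in> {p. p permutes I}"
    then have p: "p permutes I" by simp
    have "(\<Prod>i\<in>UNIV. A $ i $ p i) = (\<Prod>i\<in>I. A $ i $ p i)"
    proof (rule prod.mono_neutral_right)
      show "\<forall>i\<in>UNIV - I. A $ i $ p i = 1"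
        using p unfolding A_def permutes_def by auto
    qed auto
    also have "\<dots> = (\<Prod>i\<in>I. M $ i $ p i)"
      using p permutes_in_image[OF p] unfolding A_def by (intro prod.cong) auto
    finally show "of_int (sign p) * (\<Prod>i\<in>UNIV. A $ i $ p i) = of_int (sign p) * (\<Prod>i\<in>I. M $ i $ p i)"
      by simp
  qed
  finally show ?thesis .
qed

lemma key_zero:
  fixes M :: "real^'n^'n" and d :: "real^'n"
  assumes P: "Ps_matrix s M" and card: "card {i. d$i \<noteq> 0} \<le> s"
    and comp: "\<And>i. d$i * (M *v d)$i = 0"
  shows "d = 0"
proof (rule ccontr)
  assume "d \<noteq> 0"
  define I where "I = {i. d$i \<noteq> 0}"
  have "I \<noteq> {}" using \<open>d \<noteq> 0\<close> unfolding I_def by (auto simp: vec_eq_iff)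
  then have pm: "principal_minor M I > 0" using P card unfolding Ps_matrix_def I_def by auto
  define A where "A \<equiv> (\<chi> i j. if i \<in> I \<and> j \<in> I then M$i$j else if i = j then 1 else 0) :: real^'n^'n"
  have "det A = principal_minor M I" unfolding A_def by (rule minor_det)
  with pm have "invertible A" by (simp add: invertible_det_nz)
  then obtain B where "B ** A = mat 1" unfolding invertible_def by blast
  then have ker: "\<And>x. A *v x = 0 \<Longrightarrow> x = 0" using matrix_left_invertible_ker by blast
  have "A *v d = 0"
  proof (subst vec_eq_iff, intro allI)
    fix i
    show "(A *v d) $ i = 0 $ i"
    proof (cases "i \<in> I")
      case True
      have "(A *v d) $ i = (\<Sum>j\<in>UNIV. A$i$j * d$j)" by (simp add: matrix_vector_mult_def)
      also have "\<dots> = (\<Sum>j\<in>UNIV. M$i$j * d$j)"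
        using True by (intro sum.cong) (auto simp: A_def I_def)
      also have "\<dots> = (M *v d)$i" by (simp add: matrix_vector_mult_def)
      also have "\<dots> = 0" using comp[of i] True unfolding I_def by simp
      finally show ?thesis by simp
    next
      case False
      have "(A *v d) $ i = (\<Sum>j\<in>UNIV. A$i$j * d$j)" by (simp add: matrix_vector_mult_def)
      also have "\<dots> = (\<Sum>j\<in>UNIV. if j = i then d$j else 0)"
        using False by (intro sum.cong) (auto simp: A_def)
      also have "\<dots> = 0" using False by (simp add: I_def)
      finally show ?thesis by simp
    qed
  qed
  with ker \<open>d \<noteq> 0\<close> show False by blast
qed
lemma powr_bound:
  fixes a K r :: real
  assumes "0 \<le> a" "a powr r \<le> K" "1 \<le> r"
  shows "a \<le> max 1 K"
proof (cases "a \<le> 1")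
  case False
  then have "a powr 1 \<le> a powr r" using assms by (intro powr_mono) auto
  with assms False show ?thesis by simp
qed simp

lemma level_terms:
  fixes M :: "real^'n^'n"
  assumes "r \<ge> 2" "f_r M q r x \<le> \<gamma>"
  defines "C \<equiv> max 1 (r * \<gamma>)"
  shows "x$i \<ge> - C" "(M *v x + q)$i \<ge> - C"
    "max (x$i) 0 * max ((M *v x + q)$i) 0 \<le> C"
proof -
  let ?S1 = "\<Sum>i\<in>UNIV. (max (x $ i) 0) powr r * (max ((M *v x + q) $ i) 0) powr r"
  let ?S2 = "\<Sum>i\<in>UNIV. \<bar>min (x $ i) 0\<bar> powr r"
  let ?S3 = "\<Sum>i\<in>UNIV. \<bar>min ((M *v x + q) $ i) 0\<bar> powr r"
  have r0: "r > 0" using assms by simp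
  have "?S1 + ?S2 + ?S3 \<le> r * \<gamma>" using assms(2) r0 unfolding f_r_def
    by (simp add: field_simps)
  moreover have "?S1 \<ge> 0" "?S2 \<ge> 0" "?S3 \<ge> 0" by (auto intro!: sum_nonneg)
  moreover have "max (x $ i) 0 powr r * max ((M *v x + q) $ i) 0 powr r \<le> ?S1"
    by (rule member_le_sum) auto
  moreover have "\<bar>min (x $ i) 0\<bar> powr r \<le> ?S2" by (rule member_le_sum) auto
  moreover have "\<bar>min ((M *v x + q) $ i) 0\<bar> powr r \<le> ?S3" by (rule member_le_sum) auto
  ultimately have a: "max (x $ i) 0 powr r * max ((M *v x + q) $ i) 0 powr r \<le> r * \<gamma>"
    and b: "\<bar>min (x $ i) 0\<bar> powr r \<le> r * \<gamma>"
    and c: "\<bar>min ((M *v x + q) $ i) 0\<bar> powr r \<le> r * \<gamma>" by linarith+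
  have "\<bar>min (x $ i) 0\<bar> \<le> C" unfolding C_def using assms by (intro powr_bound[OF _ b]) auto
  then show "x$i \<ge> - C" by linarith
  have "\<bar>min ((M *v x + q) $ i) 0\<bar> \<le> C" unfolding C_def using assms by (intro powr_bound[OF _ c]) auto
  then show "(M *v x + q)$i \<ge> - C" by linarith
  have "(max (x$i) 0 * max ((M *v x + q)$i) 0) powr r \<le> r * \<gamma>"
    using a by (simp add: powr_mult)
  then show "max (x$i) 0 * max ((M *v x + q)$i) 0 \<le> C" unfolding C_def using assms
    by (intro powr_bound) auto
qed

lemma level_bounded:
  fixes M :: "real^'n^'n"
  assumes P: "Ps_matrix s M" and r: "r \<ge> 2"
  shows "bounded {x \<in> sparse_set s. f_r M q r x \<le> \<gamma>}"
proof (rule ccontr)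
  define L where "L = {x \<in> sparse_set s. f_r M q r x \<le> \<gamma>}"
  define C where "C = max 1 (r * \<gamma>)"
  assume "\<not> bounded {x \<in> sparse_set s. f_r M q r x \<le> \<gamma>}"
  then have "\<forall>k::nat. \<exists>x\<in>L. norm x > real k" unfolding L_def bounded_iff
    by (meson not_le)
  then obtain x where xL: "\<And>k. x k \<in> L" and xn: "\<And>k. norm (x k) > real k" by metis
  define u where "u k = x k /\<^sub>R norm (x k)" for k
  have xpos: "norm (x k) > 0" for k using xn[of k] by linarith
  have "u k \<in> sphere 0 1" for k using xpos[of k] by (simp add: u_def)
  then obtain d \<sigma> where d: "d \<in> sphere 0 1" and \<sigma>: "strict_mono \<sigma>" and lim: "(u \<circ> \<sigma>) \<longlonglongrightarrow> d"
    using seq_compactE[OF compact_imp_seq_compact[OF compact_sphere]] by metis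
  define v where "v k = u (\<sigma> k)" for k
  define T where "T k = norm (x (\<sigma> k))" for k
  have Tpos: "T k > 0" for k using xpos unfolding T_def by simp
  have xv: "x (\<sigma> k) = T k *\<^sub>R v k" for k using Tpos[of k]
    by (simp add: T_def v_def u_def)
  have vlim: "v \<longlonglongrightarrow> d" using lim unfolding v_def[abs_def] by (simp add: comp_def)
  have "filterlim T at_top sequentially"
  proof (rule filterlim_at_top_mono[OF filterlim_real_sequentially])
    show "\<forall>\<^sub>F k in sequentially. real k \<le> T k"
      using xn seq_suble[OF \<sigma>] unfolding T_def
      by (intro always_eventually allI) (smt (verit) of_nat_le_iff)
  qed
  then have iT: "(\<lambda>k. inverse (T k)) \<longlonglongrightarrow> 0" by (rule tendsto_inverse_0_at_top)
  have vi: "(\<lambda>k. v k $ i) \<longlonglongrightarrow> d $ i" for i by (intro tendsto_vec_nth vlim)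
  have Mvi: "(\<lambda>k. (M *v v k) $ i) \<longlonglongrightarrow> (M *v d) $ i" for i
    by (intro tendsto_vec_nth isCont_tendsto_compose[OF matrix_vector_mult_linear_continuous_at vlim])
  have terms: "x (\<sigma> k)$i \<ge> - C" "(M *v x (\<sigma> k) + q)$i \<ge> - C"
    "max (x (\<sigma> k)$i) 0 * max ((M *v x (\<sigma> k) + q)$i) 0 \<le> C" for k i
    using xL[of "\<sigma> k"] level_terms[OF r] unfolding L_def C_def by auto
  have dnn: "d$i \<ge> 0" for i
  proof (rule tendsto_le[OF _ vi])
    show "(\<lambda>k. - C * inverse (T k)) \<longlonglongrightarrow> 0" using tendsto_mult[OF tendsto_const iT, of "-C"] by simp
    show "\<forall>\<^sub>F k in sequentially. - C * inverse (T k) \<le> v k $ i"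
    proof (intro always_eventually allI)
      fix k
      have "- C \<le> T k * v k $ i" using terms(1)[of k i] xv[of k] by simp
      then show "- C * inverse (T k) \<le> v k $ i" using Tpos[of k]
        by (simp add: field_simps)
    qed
  qed simp
  have Mdnn: "(M *v d)$i \<ge> 0" for i
  proof (rule tendsto_le[OF _ Mvi])
    show "(\<lambda>k. (- C - q$i) * inverse (T k)) \<longlonglongrightarrow> 0" using tendsto_mult[OF tendsto_const iT, of "-C - q$i"] by simp
    show "\<forall>\<^sub>F k in sequentially. (- C - q$i) * inverse (T k) \<le> (M *v v k) $ i"
    proof (intro always_eventually allI)
      fix k
      have "- C \<le> T k * (M *v v k) $ i + q$i" using terms(2)[of k i] xv[of k]
        by (simp add: matrix_vector_mult_scaleR)
      then show "(- C - q$i) * inverse (T k) \<le> (M *v v k) $ i" using Tpos[of k]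
        by (simp add: field_simps)
    qed
  qed simp
  have comp: "d$i * (M *v d)$i = 0" for i
  proof -
    have l1: "(\<lambda>k. max (v k $ i) 0 * max ((M *v v k) $ i + q$i * inverse (T k)) 0)
        \<longlonglongrightarrow> max (d$i) 0 * max ((M *v d) $ i + q$i * 0) 0"
      by (intro tendsto_intros vi Mvi iT)
    have l2: "(\<lambda>k. C * inverse (T k) * inverse (T k)) \<longlonglongrightarrow> C * 0 * 0"
      by (intro tendsto_intros iT)
    have "max (d$i) 0 * max ((M *v d) $ i + q$i * 0) 0 \<le> C * 0 * 0"
    proof (rule tendsto_le[OF _ l2 l1])
     show "\<forall>\<^sub>F k in sequentially. max (v k $ i) 0 * max ((M *v v k) $ i + q$i * inverse (T k)) 0 \<le> C * inverse (T k) * inverse (T k)"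
     proof (intro always_eventually allI)
      fix k
      have e1: "max (x (\<sigma> k)$i) 0 = T k * max (v k $ i) 0" using Tpos[of k] xv[of k]
        by (simp add: max_mult_distrib_left)
      have "(M *v x (\<sigma> k) + q)$i = T k * ((M *v v k) $ i + q$i * inverse (T k))"
        using Tpos[of k] xv[of k] by (simp add: matrix_vector_mult_scaleR field_simps)
      then have e2: "max ((M *v x (\<sigma> k) + q)$i) 0 = T k * max ((M *v v k) $ i + q$i * inverse (T k)) 0"
        using Tpos[of k] by (simp add: max_mult_distrib_left)
      have "T k * T k * (max (v k $ i) 0 * max ((M *v v k) $ i + q$i * inverse (T k)) 0) \<le> C"
        using terms(3)[of k i] unfolding e1 e2 by (simp add: algebra_simps)
      then show "max (v k $ i) 0 * max ((M *v v k) $ i + q$i * inverse (T k)) 0 \<le> C * inverse (T k) * inverse (T k)"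
        using Tpos[of k] by (simp add: field_simps)
     qed
    qed simp
    then have "d$i * (M *v d)$i \<le> 0" using dnn[of i] Mdnn[of i] by simp
    with dnn[of i] Mdnn[of i] show ?thesis by (metis mult_nonneg_nonneg order.antisym)
  qed
  have card: "card {i. d$i \<noteq> 0} \<le> s"
  proof -
    have "\<forall>\<^sub>F k in sequentially. \<forall>i\<in>{i. d$i \<noteq> 0}. v k $ i \<noteq> 0"
    proof (rule eventually_ball_finite)
      show "\<forall>i\<in>{i. d $ i \<noteq> 0}. \<forall>\<^sub>F k in sequentially. v k $ i \<noteq> 0"
        using vi tendsto_imp_eventually_ne by blast
    qed simp
    then obtain k where k: "\<forall>i\<in>{i. d$i \<noteq> 0}. v k $ i \<noteq> 0"
      using eventually_sequentially by auto
    have "{i. d$i \<noteq> 0} \<subseteq> {i. x (\<sigma> k) $ i \<noteq> 0}" using k xv[of k] Tpos[of k] by auto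
    then have "card {i. d$i \<noteq> 0} \<le> card {i. x (\<sigma> k) $ i \<noteq> 0}" by (intro card_mono) auto
    also have "\<dots> \<le> s" using xL[of "\<sigma> k"] unfolding L_def sparse_set_def by simp
    finally show ?thesis .
  qed
  have "d = 0" using key_zero[OF P card comp] .
  with d show False by simp
qed

lemma f_nonneg:
  assumes "r \<ge> 2" shows "f_r M q r x \<ge> 0"
proof -
  have "0 \<le> (\<Sum>i\<in>UNIV. (max (x $ i) 0) powr r * (max ((M *v x + q) $ i) 0) powr r)
      + (\<Sum>i\<in>UNIV. \<bar>min (x $ i) 0\<bar> powr r)
      + (\<Sum>i\<in>UNIV. \<bar>min ((M *v x + q) $ i) 0\<bar> powr r)"
    by (intro add_nonneg_nonneg sum_nonneg) auto
  then show ?thesis unfolding f_r_def using assms by simp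
qed

lemma f_sol_zero:
  assumes "x \<in> lcp_sol M q" shows "f_r M q r x = 0"
proof -
  have x0: "\<And>i. 0 \<le> x$i" and w0: "\<And>i. 0 \<le> (M *v x + q)$i"
    and ip: "(\<Sum>i\<in>UNIV. x$i * (M *v x + q)$i) = 0"
    using assms unfolding lcp_sol_def inner_vec_def by auto
  have "\<forall>i\<in>UNIV. x$i * (M *v x + q)$i = 0"
    using ip x0 w0 by (subst sum_nonneg_eq_0_iff[symmetric]) auto
  then have "x$i = 0 \<or> (M *v x + q)$i = 0" for i by simp
  then have t1: "max (x $ i) 0 powr r * max ((M *v x + q) $ i) 0 powr r = 0" for i
    by (metis max.idem mult_zero_left mult_zero_right powr_0)
  moreover have t2: "min (x$i) 0 = 0" "min ((M *v x + q)$i) 0 = 0" for i using x0 w0 by auto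
  have "(\<Sum>i\<in>UNIV. (max (x $ i) 0) powr r * (max ((M *v x + q) $ i) 0) powr r) = 0"
    using t1 by (intro sum.neutral) blast
  moreover have "(\<Sum>i\<in>UNIV. \<bar>min (x $ i) 0\<bar> powr r) = 0"
    using t2 by (intro sum.neutral) simp
  moreover have "(\<Sum>i\<in>UNIV. \<bar>min ((M *v x + q) $ i) 0\<bar> powr r) = 0"
    using t2(2) by (intro sum.neutral) (metis abs_zero powr_0)
  ultimately show ?thesis unfolding f_r_def by (simp only: add_0 mult_zero_right)
qed

theorem theorem4p4:
  fixes M :: "real^'n^'n" and q :: "real^'n" and r :: real and s :: nat
  assumes "Ps_matrix s M" and "r \<ge> 2"
  shows "(\<forall>\<gamma>\<ge>0. bounded {x \<in> sparse_set s. f_r M q r x \<le> \<gamma>})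
         \<and> lcp_sol M q \<inter> sparse_set s \<subseteq> argmin_on (f_r M q r) (sparse_set s)
         \<and> bounded (lcp_sol M q \<inter> sparse_set s)
         \<and> bounded (argmin_on (f_r M q r) (sparse_set s))"
proof (intro conjI allI impI)
  fix \<gamma> :: real show "bounded {x \<in> sparse_set s. f_r M q r x \<le> \<gamma>}"
    using level_bounded[OF assms] .
next
  show "lcp_sol M q \<inter> sparse_set s \<subseteq> argmin_on (f_r M q r) (sparse_set s)"
    using f_sol_zero f_nonneg[OF assms(2)] unfolding argmin_on_def by fastforce
next
  have "lcp_sol M q \<inter> sparse_set s \<subseteq> {x \<in> sparse_set s. f_r M q r x \<le> 0}"
    using f_sol_zero by fastforce
  then show "bounded (lcp_sol M q \<inter> sparse_set s)"
    using level_bounded[OF assms] bounded_subset by blast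
next
  have z: "0 \<in> sparse_set s" unfolding sparse_set_def by simp
  have "argmin_on (f_r M q r) (sparse_set s) \<subseteq> {x \<in> sparse_set s. f_r M q r x \<le> f_r M q r 0}"
    using z unfolding argmin_on_def by auto
  then show "bounded (argmin_on (f_r M q r) (sparse_set s))"
    using level_bounded[OF assms] bounded_subset by blast
qed

end
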